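(* Let $A$ be a commutative ring and $\sigma$ a hereditary torsion theory on $A$-modules. (i) If $L\subseteq M$ is a totally $\sigma$-torsion submodule of an $A$-module $M$, then $M$ is totally $\sigma$-simple if and only if $M/L$ is totally $\sigma$-simple. (ii) If $M\subseteq M'$ are $A$-modules and there exists $\mathfrak{h}_0\in\mathcal{L}(\sigma)$ with $M'\mathfrak{h}_0\subseteq M$, then $M$ is totally $\sigma$-simple if and only if $M'$ is totally $\sigma$-simple.
   Context: $\mathcal{L}(\sigma)$ is the Gabriel filter of $\sigma$. A module $X$ is totally $\sigma$-torsion if $X\mathfrak{k}=0$ for some $\mathfrak{k}\in\mathcal{L}(\sigma)$. An $A$-module $M$ is totally $\sigma$-simple if $M$ is not totally $\sigma$-torsion and there exists $\mathfrak{h}\in\mathcal{L}(\sigma)$ such that $M\mathfrak{h}\subseteq H$ for every submodule $H\subseteq M$ that is not totally $\sigma$-torsion. *)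

theory Defs
  imports "HOL-Algebra.Module" "HOL-Algebra.Ideal" "HOL-Algebra.AbelCoset"
begin

definition ideal_colon :: "('a, 'c) ring_scheme \<Rightarrow> 'a set \<Rightarrow> 'a \<Rightarrow> 'a set" where
  "ideal_colon R J r = {a \<in> carrier R. a \<otimes>\<^bsub>R\<^esub> r \<in> J}"

text \<open>Gabriel filter on a commutative ring R (the filter L(sigma) of a hereditary
  torsion theory sigma; hereditary torsion theories correspond bijectively to Gabriel filters).\<close>
definition gabriel_filter :: "('a, 'c) ring_scheme \<Rightarrow> 'a set set \<Rightarrow> bool" where
  "gabriel_filter R F \<longleftrightarrow>
     F \<noteq> {} \<and>
     (\<forall>I\<in>F. ideal I R) \<and>
     (\<forall>I J. I \<in> F \<and> ideal J R \<and> I \<subseteq> J \<longrightarrow> J \<in> F) \<and>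
     (\<forall>I J. I \<in> F \<and> J \<in> F \<longrightarrow> I \<inter> J \<in> F) \<and>
     (\<forall>I\<in>F. \<forall>r\<in>carrier R. ideal_colon R I r \<in> F) \<and>
     (\<forall>I J. ideal J R \<and> I \<in> F \<and> (\<forall>r\<in>I. ideal_colon R J r \<in> F) \<longrightarrow> J \<in> F)"

definition module_ideal_prod ::
  "('a, 'c) ring_scheme \<Rightarrow> ('a, 'b, 'd) module_scheme \<Rightarrow> 'b set \<Rightarrow> 'a set \<Rightarrow> 'b set" where
  "module_ideal_prod R M X K =
     \<Inter>{N. submodule N R M \<and> {k \<odot>\<^bsub>M\<^esub> x | k x. k \<in> K \<and> x \<in> X} \<subseteq> N}"

definition totally_torsion ::
  "('a, 'c) ring_scheme \<Rightarrow> 'a set set \<Rightarrow> ('a, 'b, 'd) module_scheme \<Rightarrow> 'b set \<Rightarrow> bool" where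
  "totally_torsion R F M X \<longleftrightarrow> (\<exists>K\<in>F. module_ideal_prod R M X K = {\<zero>\<^bsub>M\<^esub>})"

definition totally_simple ::
  "('a, 'c) ring_scheme \<Rightarrow> 'a set set \<Rightarrow> ('a, 'b, 'd) module_scheme \<Rightarrow> bool" where
  "totally_simple R F M \<longleftrightarrow>
     \<not> totally_torsion R F M (carrier M) \<and>
     (\<exists>h\<in>F. \<forall>H. submodule H R M \<and> \<not> totally_torsion R F M H
                  \<longrightarrow> module_ideal_prod R M (carrier M) h \<subseteq> H)"

definition quot_module ::
  "('a, 'c) ring_scheme \<Rightarrow> ('a, 'b, 'd) module_scheme \<Rightarrow> 'b set \<Rightarrow> ('a, 'b set) module" where
  "quot_module R M L =
     \<lparr> carrier = a_rcosets\<^bsub>M\<^esub> L,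
       mult = (\<lambda>X Y. undefined), one = undefined,
       zero = L,
       add = set_add M,
       smult = (\<lambda>r X. L +>\<^bsub>M\<^esub> (r \<odot>\<^bsub>M\<^esub> (SOME x. x \<in> X))) \<rparr>"

end

theory Submission
  imports Defs
begin


lemma colon_ideal:
  fixes R (structure)
  assumes R: "cring R" and J: "ideal J R" and r: "r \<in> carrier R"
  shows "ideal (ideal_colon R J r) R"
proof -
  interpret cring R by fact
  interpret ideal J R by fact
  show ?thesis
  proof (rule idealI)
    show "ring R" by (rule ring_axioms)
    show "subgroup (ideal_colon R J r) (add_monoid R)"
      apply (rule add.subgroupI)
      subgoal by (auto simp: ideal_colon_def)
      subgoal using r by (auto simp: ideal_colon_def intro!: exI[of _ \<zero>])
      subgoal for a using r by (simp add: ideal_colon_def l_minus)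
      subgoal for a b using r by (simp add: ideal_colon_def l_distr)
      done
  next
    fix a x assume "a \<in> ideal_colon R J r" "x \<in> carrier R"
    then show "x \<otimes> a \<in> ideal_colon R J r"
      using r by (simp add: ideal_colon_def m_assoc I_l_closed)
  next
    fix a x assume a: "a \<in> ideal_colon R J r" and x: "x \<in> carrier R"
    then have "a \<otimes> x \<otimes> r = x \<otimes> (a \<otimes> r)" using r by (simp add: ideal_colon_def m_assoc m_lcomm)
    then show "a \<otimes> x \<in> ideal_colon R J r"
      using r a x by (simp add: ideal_colon_def I_l_closed)
  qed
qed

lemma gf_ideal: "gabriel_filter R F \<Longrightarrow> I \<in> F \<Longrightarrow> ideal I R"
  unfolding gabriel_filter_def by (elim conjE) (erule (1) bspec)

lemma gf_up:
  assumes G: "gabriel_filter R F" and "I \<in> F" "ideal J R" "I \<subseteq> J" shows "J \<in> F"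
proof -
  have "\<forall>I J. I \<in> F \<and> ideal J R \<and> I \<subseteq> J \<longrightarrow> J \<in> F"
    using G unfolding gabriel_filter_def by (elim conjE) assumption
  then show ?thesis using assms(2-4) by blast
qed

lemma gf_last:
  assumes G: "gabriel_filter R F" and "ideal J R" "I \<in> F" "\<And>r. r \<in> I \<Longrightarrow> ideal_colon R J r \<in> F"
  shows "J \<in> F"
proof -
  have "\<forall>I J. ideal J R \<and> I \<in> F \<and> (\<forall>r\<in>I. ideal_colon R J r \<in> F) \<longrightarrow> J \<in> F"
    using G unfolding gabriel_filter_def by (elim conjE) assumption
  then show ?thesis using assms(2-4) by blast
qed

lemma gf_sub: "gabriel_filter R F \<Longrightarrow> I \<in> F \<Longrightarrow> I \<subseteq> carrier R"
  using gf_ideal additive_subgroup.a_subset ideal.axioms(1) by metis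

lemma gf_comb:
  assumes R: "cring R" and G: "gabriel_filter R F" and J: "ideal J R"
    and I: "I \<in> F" and K: "K \<in> F" and H: "\<And>a b. a \<in> I \<Longrightarrow> b \<in> K \<Longrightarrow> b \<otimes>\<^bsub>R\<^esub> a \<in> J"
  shows "J \<in> F"
proof (rule gf_last[OF G J I])
  fix r assume r: "r \<in> I"
  have rc: "r \<in> carrier R" using gf_sub[OF G I] r by blast
  have "K \<subseteq> ideal_colon R J r" using H r gf_sub[OF G K] by (auto simp: ideal_colon_def)
  then show "ideal_colon R J r \<in> F" using gf_up[OF G K colon_ideal[OF R J rc]] by blast
qed

lemma prod_gen: "k \<in> K \<Longrightarrow> x \<in> X \<Longrightarrow> k \<odot>\<^bsub>M\<^esub> x \<in> module_ideal_prod R M X K"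
  unfolding module_ideal_prod_def by blast

lemma prod_least: "submodule N R M \<Longrightarrow> (\<And>k x. k \<in> K \<Longrightarrow> x \<in> X \<Longrightarrow> k \<odot>\<^bsub>M\<^esub> x \<in> N)
   \<Longrightarrow> module_ideal_prod R M X K \<subseteq> N"
  unfolding module_ideal_prod_def by blast

lemma sub_zero: "submodule N R M \<Longrightarrow> \<zero>\<^bsub>M\<^esub> \<in> N"
  using subgroup.one_closed[OF submodule.axioms(1)] by fastforce

lemma prod_zero: "\<zero>\<^bsub>M\<^esub> \<in> module_ideal_prod R M X K"
  unfolding module_ideal_prod_def by (rule InterI) (simp, elim conjE, erule sub_zero)

lemma zero_submodule:
  assumes "module R M" shows "submodule {\<zero>\<^bsub>M\<^esub>} R M"
proof -
  interpret module R M by fact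
  show ?thesis by (rule submoduleI) (simp_all)
qed

lemma torsion_elem:
  assumes "module R M"
  shows "totally_torsion R F M X \<longleftrightarrow> (\<exists>K\<in>F. \<forall>k\<in>K. \<forall>x\<in>X. k \<odot>\<^bsub>M\<^esub> x = \<zero>\<^bsub>M\<^esub>)"
proof
  assume "totally_torsion R F M X"
  then obtain K where K: "K \<in> F" "module_ideal_prod R M X K = {\<zero>\<^bsub>M\<^esub>}"
    unfolding totally_torsion_def by blast
  have "\<forall>k\<in>K. \<forall>x\<in>X. k \<odot>\<^bsub>M\<^esub> x = \<zero>\<^bsub>M\<^esub>"
  proof (intro ballI)
    fix k x assume "k \<in> K" "x \<in> X"
    then have "k \<odot>\<^bsub>M\<^esub> x \<in> module_ideal_prod R M X K" by (rule prod_gen)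
    then show "k \<odot>\<^bsub>M\<^esub> x = \<zero>\<^bsub>M\<^esub>" using K(2) by simp
  qed
  then show "\<exists>K\<in>F. \<forall>k\<in>K. \<forall>x\<in>X. k \<odot>\<^bsub>M\<^esub> x = \<zero>\<^bsub>M\<^esub>" using K(1) by blast
next
  assume "\<exists>K\<in>F. \<forall>k\<in>K. \<forall>x\<in>X. k \<odot>\<^bsub>M\<^esub> x = \<zero>\<^bsub>M\<^esub>"
  then obtain K where K: "K \<in> F" "\<forall>k\<in>K. \<forall>x\<in>X. k \<odot>\<^bsub>M\<^esub> x = \<zero>\<^bsub>M\<^esub>" by blast
  have "module_ideal_prod R M X K \<subseteq> {\<zero>\<^bsub>M\<^esub>}"
    by (rule prod_least[OF zero_submodule[OF assms]]) (simp add: K(2))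
  then have "module_ideal_prod R M X K = {\<zero>\<^bsub>M\<^esub>}" using prod_zero[of M R X K] by blast
  then show "totally_torsion R F M X" using K(1) unfolding totally_torsion_def by blast
qed

lemma sub_char:
  assumes "module R M"
  shows "submodule H R M \<longleftrightarrow> H \<subseteq> carrier M \<and> \<zero>\<^bsub>M\<^esub> \<in> H \<and>
     (\<forall>a\<in>H. \<forall>b\<in>H. a \<oplus>\<^bsub>M\<^esub> b \<in> H) \<and> (\<forall>r\<in>carrier R. \<forall>a\<in>H. r \<odot>\<^bsub>M\<^esub> a \<in> H)"
proof
  assume H: "submodule H R M"
  show "H \<subseteq> carrier M \<and> \<zero>\<^bsub>M\<^esub> \<in> H \<and>
     (\<forall>a\<in>H. \<forall>b\<in>H. a \<oplus>\<^bsub>M\<^esub> b \<in> H) \<and> (\<forall>r\<in>carrier R. \<forall>a\<in>H. r \<odot>\<^bsub>M\<^esub> a \<in> H)"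
    using module.submoduleE(1,4,5)[OF assms H] sub_zero[OF H] by simp
next
  assume H: "H \<subseteq> carrier M \<and> \<zero>\<^bsub>M\<^esub> \<in> H \<and>
     (\<forall>a\<in>H. \<forall>b\<in>H. a \<oplus>\<^bsub>M\<^esub> b \<in> H) \<and> (\<forall>r\<in>carrier R. \<forall>a\<in>H. r \<odot>\<^bsub>M\<^esub> a \<in> H)"
  interpret module R M by fact
  show "submodule H R M"
  proof (rule submoduleI)
    fix a assume a: "a \<in> H"
    then have ac: "a \<in> carrier M" using H by blast
    have "\<ominus>\<^bsub>M\<^esub> a = (\<ominus>\<^bsub>R\<^esub> \<one>\<^bsub>R\<^esub>) \<odot>\<^bsub>M\<^esub> a"
      using smult_l_minus[of "\<one>\<^bsub>R\<^esub>" a] ac by simp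
    then show "\<ominus>\<^bsub>M\<^esub> a \<in> H" using H a by simp
  next
    show "H \<subseteq> carrier M" using H by simp
    show "\<zero>\<^bsub>M\<^esub> \<in> H" using H by simp
    show "\<And>a b. a \<in> H \<Longrightarrow> b \<in> H \<Longrightarrow> a \<oplus>\<^bsub>M\<^esub> b \<in> H" using H by simp
    show "\<And>a x. a \<in> carrier R \<Longrightarrow> x \<in> H \<Longrightarrow> a \<odot>\<^bsub>M\<^esub> x \<in> H" using H by simp
  qed
qed

lemma prod_sub_iff: "submodule H R M \<Longrightarrow>

     module_ideal_prod R M X h \<subseteq> H \<longleftrightarrow> (\<forall>k\<in>h. \<forall>x\<in>X. k \<odot>\<^bsub>M\<^esub> x \<in> H)"
proof
  assume "module_ideal_prod R M X h \<subseteq> H"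
  then show "\<forall>k\<in>h. \<forall>x\<in>X. k \<odot>\<^bsub>M\<^esub> x \<in> H" using prod_gen[of _ h _ X M R] by blast
next
  assume "submodule H R M" "\<forall>k\<in>h. \<forall>x\<in>X. k \<odot>\<^bsub>M\<^esub> x \<in> H"
  then show "module_ideal_prod R M X h \<subseteq> H" using prod_least[of H R M h X] by blast
qed

lemma simple_elem:
  assumes "module R M"
  shows "totally_simple R F M \<longleftrightarrow>
    \<not> (\<exists>K\<in>F. \<forall>k\<in>K. \<forall>x\<in>carrier M. k \<odot>\<^bsub>M\<^esub> x = \<zero>\<^bsub>M\<^esub>) \<and>
    (\<exists>h\<in>F. \<forall>H. submodule H R M \<and> \<not> (\<exists>K\<in>F. \<forall>k\<in>K. \<forall>x\<in>H. k \<odot>\<^bsub>M\<^esub> x = \<zero>\<^bsub>M\<^esub>)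
        \<longrightarrow> (\<forall>k\<in>h. \<forall>x\<in>carrier M. k \<odot>\<^bsub>M\<^esub> x \<in> H))"
  unfolding totally_simple_def torsion_elem[OF assms]
  apply (rule conj_cong[OF refl])
  apply (rule bex_cong[OF refl])
  apply (rule iff_allI)
  apply (rule imp_cong[OF refl])
  apply (erule conjE)
  apply (erule prod_sub_iff)
  done



lemma core:
  assumes R: "cring R" and G: "gabriel_filter R F" and M: "module R M"
    and X: "X \<subseteq> carrier M" and Xc: "\<forall>r\<in>carrier R. \<forall>x\<in>X. r \<odot>\<^bsub>M\<^esub> x \<in> X"
    and S: "\<forall>H\<in>S. submodule H R M" and I: "I \<in> F" and K: "K \<in> F"
    and H: "\<forall>a\<in>I. \<forall>b\<in>K. \<forall>x\<in>X. \<forall>H\<in>S. b \<odot>\<^bsub>M\<^esub> (a \<odot>\<^bsub>M\<^esub> x) \<in> H"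
  shows "\<exists>J\<in>F. \<forall>r\<in>J. \<forall>x\<in>X. \<forall>H\<in>S. r \<odot>\<^bsub>M\<^esub> x \<in> H"
proof -
  interpret module R M by fact
  define J where "J = {r \<in> carrier R. \<forall>x\<in>X. \<forall>H\<in>S. r \<odot>\<^bsub>M\<^esub> x \<in> H}"
  have sc: "\<And>H. H \<in> S \<Longrightarrow> H \<subseteq> carrier M \<and> \<zero>\<^bsub>M\<^esub> \<in> H \<and>
     (\<forall>a\<in>H. \<forall>b\<in>H. a \<oplus>\<^bsub>M\<^esub> b \<in> H) \<and> (\<forall>r\<in>carrier R. \<forall>a\<in>H. r \<odot>\<^bsub>M\<^esub> a \<in> H)"
  proof -
    fix H assume "H \<in> S"
    then have "submodule H R M" using S by blast
    then show "?thesis H" using sub_char[OF M, of H] by simp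
  qed
  have Xm: "\<And>x. x \<in> X \<Longrightarrow> x \<in> carrier M" using X by blast
  have "ideal J R"
  proof (rule idealI)
    show "ring R" by (rule R.ring_axioms)
    show "subgroup J (add_monoid R)"
    proof (rule R.add.subgroupI)
      show "J \<subseteq> carrier R" by (auto simp: J_def)
      have "\<zero>\<^bsub>R\<^esub> \<in> J" unfolding J_def
      proof (intro CollectI conjI ballI)
        fix x H assume "x \<in> X" "H \<in> S"
        then show "\<zero>\<^bsub>R\<^esub> \<odot>\<^bsub>M\<^esub> x \<in> H" using sc[of H] Xm[of x] by simp
      qed simp
      then show "J \<noteq> {}" by blast
    next
      fix a assume a: "a \<in> J"
      then have ac: "a \<in> carrier R" by (simp add: J_def)
      have "\<forall>x\<in>X. \<forall>H\<in>S. (\<ominus>\<^bsub>R\<^esub> a) \<odot>\<^bsub>M\<^esub> x \<in> H"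
      proof (intro ballI)
        fix x H assume x: "x \<in> X" and HS: "H \<in> S"
        have ax: "a \<odot>\<^bsub>M\<^esub> x \<in> H" using a x HS by (simp add: J_def)
        have "(\<ominus>\<^bsub>R\<^esub> a) \<odot>\<^bsub>M\<^esub> x = (\<ominus>\<^bsub>R\<^esub> \<one>\<^bsub>R\<^esub>) \<odot>\<^bsub>M\<^esub> (a \<odot>\<^bsub>M\<^esub> x)"
          using ac Xm[OF x] by (simp add: smult_l_minus)
        then show "(\<ominus>\<^bsub>R\<^esub> a) \<odot>\<^bsub>M\<^esub> x \<in> H" using sc[OF HS] ax by simp
      qed
      then show "\<ominus>\<^bsub>R\<^esub> a \<in> J" using ac by (simp add: J_def)
    next
      fix a b assume a: "a \<in> J" and b: "b \<in> J"
      have "\<forall>x\<in>X. \<forall>H\<in>S. (a \<oplus>\<^bsub>R\<^esub> b) \<odot>\<^bsub>M\<^esub> x \<in> H"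
      proof (intro ballI)
        fix x H assume x: "x \<in> X" and HS: "H \<in> S"
        have "a \<odot>\<^bsub>M\<^esub> x \<in> H" "b \<odot>\<^bsub>M\<^esub> x \<in> H" using a b x HS by (simp_all add: J_def)
        moreover have "(a \<oplus>\<^bsub>R\<^esub> b) \<odot>\<^bsub>M\<^esub> x = a \<odot>\<^bsub>M\<^esub> x \<oplus>\<^bsub>M\<^esub> b \<odot>\<^bsub>M\<^esub> x"
          using a b Xm[OF x] by (simp add: J_def smult_l_distr)
        ultimately show "(a \<oplus>\<^bsub>R\<^esub> b) \<odot>\<^bsub>M\<^esub> x \<in> H" using sc[OF HS] by simp
      qed
      then show "a \<oplus>\<^bsub>R\<^esub> b \<in> J" using a b by (simp add: J_def)
    qed
  next
    fix a x assume a: "a \<in> J" and x: "x \<in> carrier R"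
    have "\<forall>y\<in>X. \<forall>H\<in>S. (x \<otimes>\<^bsub>R\<^esub> a) \<odot>\<^bsub>M\<^esub> y \<in> H"
    proof (intro ballI)
      fix y H assume y: "y \<in> X" and HS: "H \<in> S"
      have "a \<odot>\<^bsub>M\<^esub> y \<in> H" using a y HS by (simp add: J_def)
      moreover have "(x \<otimes>\<^bsub>R\<^esub> a) \<odot>\<^bsub>M\<^esub> y = x \<odot>\<^bsub>M\<^esub> (a \<odot>\<^bsub>M\<^esub> y)"
        using a x Xm[OF y] by (simp add: J_def smult_assoc1)
      ultimately show "(x \<otimes>\<^bsub>R\<^esub> a) \<odot>\<^bsub>M\<^esub> y \<in> H" using sc[OF HS] x by simp
    qed
    then show "x \<otimes>\<^bsub>R\<^esub> a \<in> J" using a x by (simp add: J_def)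
  next
    fix a x assume a: "a \<in> J" and x: "x \<in> carrier R"
    have "\<forall>y\<in>X. \<forall>H\<in>S. (a \<otimes>\<^bsub>R\<^esub> x) \<odot>\<^bsub>M\<^esub> y \<in> H"
    proof (intro ballI)
      fix y H assume y: "y \<in> X" and HS: "H \<in> S"
      have "x \<odot>\<^bsub>M\<^esub> y \<in> X" using Xc x y by blast
      then have "a \<odot>\<^bsub>M\<^esub> (x \<odot>\<^bsub>M\<^esub> y) \<in> H" using a HS by (simp add: J_def)
      moreover have "(a \<otimes>\<^bsub>R\<^esub> x) \<odot>\<^bsub>M\<^esub> y = a \<odot>\<^bsub>M\<^esub> (x \<odot>\<^bsub>M\<^esub> y)"
        using a x Xm[OF y] by (simp add: J_def smult_assoc1)
      ultimately show "(a \<otimes>\<^bsub>R\<^esub> x) \<odot>\<^bsub>M\<^esub> y \<in> H" by simp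
    qed
    then show "a \<otimes>\<^bsub>R\<^esub> x \<in> J" using a x by (simp add: J_def)
  qed
  moreover have "J \<in> F"
  proof (rule gf_comb[OF R G \<open>ideal J R\<close> I K])
    fix a b assume a: "a \<in> I" and b: "b \<in> K"
    have ac: "a \<in> carrier R" and bc: "b \<in> carrier R" using a b gf_sub[OF G I] gf_sub[OF G K] by auto
    have "\<forall>x\<in>X. \<forall>H\<in>S. (b \<otimes>\<^bsub>R\<^esub> a) \<odot>\<^bsub>M\<^esub> x \<in> H"
    proof (intro ballI)
      fix x H assume x: "x \<in> X" and HS: "H \<in> S"
      have "(b \<otimes>\<^bsub>R\<^esub> a) \<odot>\<^bsub>M\<^esub> x = b \<odot>\<^bsub>M\<^esub> (a \<odot>\<^bsub>M\<^esub> x)"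
        using ac bc Xm[OF x] by (simp add: smult_assoc1)
      then show "(b \<otimes>\<^bsub>R\<^esub> a) \<odot>\<^bsub>M\<^esub> x \<in> H" using H a b x HS by simp
    qed
    then show "b \<otimes>\<^bsub>R\<^esub> a \<in> J" using ac bc by (simp add: J_def)
  qed
  ultimately show ?thesis by (intro bexI[of _ J]) (simp_all add: J_def)
qed



lemma part2:
  fixes R :: "('a, 'c) ring_scheme" and M' :: "('a, 'e) module"
  assumes R: "cring R" and G: "gabriel_filter R F" and M: "module R M'"
    and N: "submodule N R M'" and h0: "h0 \<in> F"
    and h0N: "module_ideal_prod R M' (carrier M') h0 \<subseteq> N"
  shows "totally_simple R F (M'\<lparr>carrier := N\<rparr>) \<longleftrightarrow> totally_simple R F M'"
proof -
  interpret module R M' by fact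
  have Mn: "module R (M'\<lparr>carrier := N\<rparr>)" using submodule.submodule_is_module[OF N M] .
  have Nc: "N \<subseteq> carrier M'" using submoduleE(1)[OF N] .
  have aN: "\<And>a x. a \<in> h0 \<Longrightarrow> x \<in> carrier M' \<Longrightarrow> a \<odot>\<^bsub>M'\<^esub> x \<in> N"
    using h0N prod_gen[of _ h0 _ "carrier M'" M' R] by (meson subsetD)
  have h0c: "h0 \<subseteq> carrier R" using gf_sub[OF G h0] .
  have subMn: "\<And>H. submodule H R (M'\<lparr>carrier := N\<rparr>) \<longleftrightarrow> submodule H R M' \<and> H \<subseteq> N"
  proof -
    fix H
    show "submodule H R (M'\<lparr>carrier := N\<rparr>) \<longleftrightarrow> submodule H R M' \<and> H \<subseteq> N"
      unfolding sub_char[OF Mn] sub_char[OF M] using Nc by simp blast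
  qed
  have zsub: "\<forall>H\<in>{{\<zero>\<^bsub>M'\<^esub>}}. submodule H R M'" using zero_submodule[OF M] by simp
  have torX: "\<exists>K\<in>F. \<forall>k\<in>K. \<forall>x\<in>X. k \<odot>\<^bsub>M'\<^esub> x = \<zero>\<^bsub>M'\<^esub>"
    if X: "submodule X R M'" and T: "\<exists>K\<in>F. \<forall>k\<in>K. \<forall>x\<in>X \<inter> N. k \<odot>\<^bsub>M'\<^esub> x = \<zero>\<^bsub>M'\<^esub>" for X
  proof -
    obtain K where K: "K \<in> F" "\<forall>k\<in>K. \<forall>x\<in>X \<inter> N. k \<odot>\<^bsub>M'\<^esub> x = \<zero>\<^bsub>M'\<^esub>" using T by blast
    have Xs: "X \<subseteq> carrier M'" "\<forall>r\<in>carrier R. \<forall>x\<in>X. r \<odot>\<^bsub>M'\<^esub> x \<in> X"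
      using submoduleE(1,4)[OF X] by auto
    have "\<exists>J\<in>F. \<forall>r\<in>J. \<forall>x\<in>X. \<forall>H\<in>{{\<zero>\<^bsub>M'\<^esub>}}. r \<odot>\<^bsub>M'\<^esub> x \<in> H"
    proof (rule core[OF R G M Xs(1) Xs(2) zsub h0 K(1)], intro ballI)
      fix a b x H assume a: "a \<in> h0" and b: "b \<in> K" and x: "x \<in> X" and HS: "H \<in> {{\<zero>\<^bsub>M'\<^esub>}}"
      have "a \<odot>\<^bsub>M'\<^esub> x \<in> X \<inter> N" using aN[OF a] Xs x a h0c by blast
      then show "b \<odot>\<^bsub>M'\<^esub> (a \<odot>\<^bsub>M'\<^esub> x) \<in> H" using K(2) b HS by simp
    qed
    then show ?thesis by simp
  qed
  have torN: "\<exists>K\<in>F. \<forall>k\<in>K. \<forall>x\<in>carrier M'. k \<odot>\<^bsub>M'\<^esub> x = \<zero>\<^bsub>M'\<^esub>"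
    if "\<exists>K\<in>F. \<forall>k\<in>K. \<forall>x\<in>N. k \<odot>\<^bsub>M'\<^esub> x = \<zero>\<^bsub>M'\<^esub>"
    using torX[OF carrier_is_submodule] that Nc by (simp add: Int_absorb1)
  have simpMn: "totally_simple R F (M'\<lparr>carrier := N\<rparr>) \<longleftrightarrow>
    \<not> (\<exists>K\<in>F. \<forall>k\<in>K. \<forall>x\<in>N. k \<odot>\<^bsub>M'\<^esub> x = \<zero>\<^bsub>M'\<^esub>) \<and>
    (\<exists>h\<in>F. \<forall>H. submodule H R M' \<and> H \<subseteq> N \<and> \<not> (\<exists>K\<in>F. \<forall>k\<in>K. \<forall>x\<in>H. k \<odot>\<^bsub>M'\<^esub> x = \<zero>\<^bsub>M'\<^esub>)
        \<longrightarrow> (\<forall>k\<in>h. \<forall>x\<in>N. k \<odot>\<^bsub>M'\<^esub> x \<in> H))"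
    unfolding simple_elem[OF Mn] subMn by simp
  show ?thesis
  proof
    assume "totally_simple R F (M'\<lparr>carrier := N\<rparr>)"
    then have S1: "\<not> (\<exists>K\<in>F. \<forall>k\<in>K. \<forall>x\<in>N. k \<odot>\<^bsub>M'\<^esub> x = \<zero>\<^bsub>M'\<^esub>)"
      and S2: "\<exists>h\<in>F. \<forall>H. submodule H R M' \<and> H \<subseteq> N \<and> \<not> (\<exists>K\<in>F. \<forall>k\<in>K. \<forall>x\<in>H. k \<odot>\<^bsub>M'\<^esub> x = \<zero>\<^bsub>M'\<^esub>)
        \<longrightarrow> (\<forall>k\<in>h. \<forall>x\<in>N. k \<odot>\<^bsub>M'\<^esub> x \<in> H)"
      using iffD1[OF simpMn] by blast+
    obtain h where h: "h \<in> F" "\<forall>H. submodule H R M' \<and> H \<subseteq> N \<and> \<not> (\<exists>K\<in>F. \<forall>k\<in>K. \<forall>x\<in>H. k \<odot>\<^bsub>M'\<^esub> x = \<zero>\<^bsub>M'\<^esub>)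
        \<longrightarrow> (\<forall>k\<in>h. \<forall>x\<in>N. k \<odot>\<^bsub>M'\<^esub> x \<in> H)" using S2 by blast
    define S where "S = {H. submodule H R M' \<and> H \<subseteq> N \<and> \<not> (\<exists>K\<in>F. \<forall>k\<in>K. \<forall>x\<in>H. k \<odot>\<^bsub>M'\<^esub> x = \<zero>\<^bsub>M'\<^esub>)}"
    have SS: "\<forall>H\<in>S. submodule H R M'" by (simp add: S_def)
    have "\<exists>J\<in>F. \<forall>r\<in>J. \<forall>x\<in>carrier M'. \<forall>H\<in>S. r \<odot>\<^bsub>M'\<^esub> x \<in> H"
    proof (rule core[OF R G M subset_refl _ SS h0 h(1)], simp, intro ballI)
      fix a b x H assume a: "a \<in> h0" and b: "b \<in> h" and x: "x \<in> carrier M'" and HS: "H \<in> S"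
      show "b \<odot>\<^bsub>M'\<^esub> (a \<odot>\<^bsub>M'\<^esub> x) \<in> H" using h(2) HS aN[OF a x] b unfolding S_def by blast
    qed
    then obtain J where J: "J \<in> F" "\<forall>r\<in>J. \<forall>x\<in>carrier M'. \<forall>H\<in>S. r \<odot>\<^bsub>M'\<^esub> x \<in> H" by blast
    have "\<forall>H. submodule H R M' \<and> \<not> (\<exists>K\<in>F. \<forall>k\<in>K. \<forall>x\<in>H. k \<odot>\<^bsub>M'\<^esub> x = \<zero>\<^bsub>M'\<^esub>)
        \<longrightarrow> (\<forall>k\<in>J. \<forall>x\<in>carrier M'. k \<odot>\<^bsub>M'\<^esub> x \<in> H)"
    proof (intro allI impI)
      fix H assume H: "submodule H R M' \<and> \<not> (\<exists>K\<in>F. \<forall>k\<in>K. \<forall>x\<in>H. k \<odot>\<^bsub>M'\<^esub> x = \<zero>\<^bsub>M'\<^esub>)"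
      have HN: "submodule (H \<inter> N) R M'"
        using H N unfolding sub_char[OF M] by auto
      have "\<not> (\<exists>K\<in>F. \<forall>k\<in>K. \<forall>x\<in>H \<inter> N. k \<odot>\<^bsub>M'\<^esub> x = \<zero>\<^bsub>M'\<^esub>)"
        using torX[of H] H by blast
      then have "H \<inter> N \<in> S" using HN by (simp add: S_def)
      then show "\<forall>k\<in>J. \<forall>x\<in>carrier M'. k \<odot>\<^bsub>M'\<^esub> x \<in> H" using J(2) by blast
    qed
    moreover have "\<not> (\<exists>K\<in>F. \<forall>k\<in>K. \<forall>x\<in>carrier M'. k \<odot>\<^bsub>M'\<^esub> x = \<zero>\<^bsub>M'\<^esub>)"
      using S1 Nc by blast
    ultimately show "totally_simple R F M'" unfolding simple_elem[OF M] using J(1) by blast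
  next
    assume "totally_simple R F M'"
    then have S1: "\<not> (\<exists>K\<in>F. \<forall>k\<in>K. \<forall>x\<in>carrier M'. k \<odot>\<^bsub>M'\<^esub> x = \<zero>\<^bsub>M'\<^esub>)"
      and S2: "\<exists>h\<in>F. \<forall>H. submodule H R M' \<and> \<not> (\<exists>K\<in>F. \<forall>k\<in>K. \<forall>x\<in>H. k \<odot>\<^bsub>M'\<^esub> x = \<zero>\<^bsub>M'\<^esub>)
        \<longrightarrow> (\<forall>k\<in>h. \<forall>x\<in>carrier M'. k \<odot>\<^bsub>M'\<^esub> x \<in> H)"
      using iffD1[OF simple_elem[OF M]] by blast+
    have "\<not> (\<exists>K\<in>F. \<forall>k\<in>K. \<forall>x\<in>N. k \<odot>\<^bsub>M'\<^esub> x = \<zero>\<^bsub>M'\<^esub>)" using S1 torN by blast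
    moreover have "\<exists>h\<in>F. \<forall>H. submodule H R M' \<and> H \<subseteq> N \<and> \<not> (\<exists>K\<in>F. \<forall>k\<in>K. \<forall>x\<in>H. k \<odot>\<^bsub>M'\<^esub> x = \<zero>\<^bsub>M'\<^esub>)
        \<longrightarrow> (\<forall>k\<in>h. \<forall>x\<in>N. k \<odot>\<^bsub>M'\<^esub> x \<in> H)"
    proof -
      obtain h where h: "h \<in> F" "\<forall>H. submodule H R M' \<and> \<not> (\<exists>K\<in>F. \<forall>k\<in>K. \<forall>x\<in>H. k \<odot>\<^bsub>M'\<^esub> x = \<zero>\<^bsub>M'\<^esub>)
        \<longrightarrow> (\<forall>k\<in>h. \<forall>x\<in>carrier M'. k \<odot>\<^bsub>M'\<^esub> x \<in> H)" using S2 by blast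
      show ?thesis
      proof (intro bexI[OF _ h(1)] allI impI ballI)
        fix H k x assume H: "submodule H R M' \<and> H \<subseteq> N \<and> \<not> (\<exists>K\<in>F. \<forall>k\<in>K. \<forall>x\<in>H. k \<odot>\<^bsub>M'\<^esub> x = \<zero>\<^bsub>M'\<^esub>)"
          and k: "k \<in> h" and x: "x \<in> N"
        have "x \<in> carrier M'" using x Nc by blast
        then show "k \<odot>\<^bsub>M'\<^esub> x \<in> H" using h(2) H k by blast
      qed
    qed
    ultimately show "totally_simple R F (M'\<lparr>carrier := N\<rparr>)"
      using iffD2[OF simpMn] by blast
  qed
qed



locale qm = module R M for R and M :: "('a, 'b) module" +
  fixes L assumes L: "submodule L R M"
begin

lemma L_abs: "abelian_subgroup L M"
  by (rule abelian_subgroupI3[OF additive_subgroup.intro[OF submodule.axioms(1)[OF L]]])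
     (rule module.axioms(2)[OF module_axioms])

sublocale Lq: abelian_subgroup L M by (rule L_abs)

abbreviation "Q \<equiv> quot_module R M L"

lemma Lsub: "L \<subseteq> carrier M" using submoduleE(1)[OF L] .

lemma Q_carrier: "carrier Q = a_rcosets\<^bsub>M\<^esub> L" by (simp add: quot_module_def)
lemma Q_zero: "\<zero>\<^bsub>Q\<^esub> = L" by (simp add: quot_module_def)
lemma Q_add: "(\<oplus>\<^bsub>Q\<^esub>) = set_add M" by (simp add: quot_module_def)
lemma Q_smult: "r \<odot>\<^bsub>Q\<^esub> X = L +>\<^bsub>M\<^esub> (r \<odot>\<^bsub>M\<^esub> (SOME x. x \<in> X))" by (simp add: quot_module_def)

lemma Q_carrier_iff: "C \<in> carrier Q \<longleftrightarrow> (\<exists>x\<in>carrier M. C = L +>\<^bsub>M\<^esub> x)"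
  unfolding Q_carrier A_RCOSETS_def RCOSETS_def a_r_coset_def by auto

lemma coset_in: "x \<in> carrier M \<Longrightarrow> L +>\<^bsub>M\<^esub> x \<in> carrier Q"
  using Q_carrier_iff by blast

lemma Q_cases: assumes "C \<in> carrier Q" obtains x where "x \<in> carrier M" "C = L +>\<^bsub>M\<^esub> x"
  using assms Q_carrier_iff by blast

lemma add_coset: "x \<in> carrier M \<Longrightarrow> y \<in> carrier M \<Longrightarrow>
  (L +>\<^bsub>M\<^esub> x) \<oplus>\<^bsub>Q\<^esub> (L +>\<^bsub>M\<^esub> y) = L +>\<^bsub>M\<^esub> (x \<oplus>\<^bsub>M\<^esub> y)"
  unfolding Q_add by (rule Lq.a_rcos_sum)

lemma coset_zero: "L +>\<^bsub>M\<^esub> \<zero>\<^bsub>M\<^esub> = L"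
  using Lsub by simp

lemma coset_eq_L: "x \<in> carrier M \<Longrightarrow> (L +>\<^bsub>M\<^esub> x = L \<longleftrightarrow> x \<in> L)"
  using Lq.a_rcos_const Lq.a_rcos_self by metis

lemma coset_mem: "x \<in> carrier M \<Longrightarrow> y \<in> carrier M \<Longrightarrow> (y \<in> L +>\<^bsub>M\<^esub> x \<longleftrightarrow> y \<oplus>\<^bsub>M\<^esub> \<ominus>\<^bsub>M\<^esub> x \<in> L)"
  by (rule Lq.a_rcos_module)

lemma coset_eq: "x \<in> carrier M \<Longrightarrow> y \<in> carrier M \<Longrightarrow> (L +>\<^bsub>M\<^esub> y = L +>\<^bsub>M\<^esub> x \<longleftrightarrow> y \<in> L +>\<^bsub>M\<^esub> x)"
  using Lq.a_repr_independence' Lq.a_rcos_self by metis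

lemma smult_coset: assumes r: "r \<in> carrier R" and x: "x \<in> carrier M"
  shows "r \<odot>\<^bsub>Q\<^esub> (L +>\<^bsub>M\<^esub> x) = L +>\<^bsub>M\<^esub> (r \<odot>\<^bsub>M\<^esub> x)"
proof -
  define y where "y = (SOME y. y \<in> L +>\<^bsub>M\<^esub> x)"
  have "x \<in> L +>\<^bsub>M\<^esub> x" using x by (rule Lq.a_rcos_self)
  then have yin: "y \<in> L +>\<^bsub>M\<^esub> x" unfolding y_def by (rule someI)
  have yc: "y \<in> carrier M" using Lq.a_elemrcos_carrier[OF x yin] .
  have d: "y \<oplus>\<^bsub>M\<^esub> \<ominus>\<^bsub>M\<^esub> x \<in> L" using coset_mem[OF x yc] yin by simp
  have "r \<odot>\<^bsub>M\<^esub> (y \<oplus>\<^bsub>M\<^esub> \<ominus>\<^bsub>M\<^esub> x) = r \<odot>\<^bsub>M\<^esub> y \<oplus>\<^bsub>M\<^esub> \<ominus>\<^bsub>M\<^esub> (r \<odot>\<^bsub>M\<^esub> x)"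
    using r x yc by (simp add: smult_r_distr smult_r_minus)
  moreover have "r \<odot>\<^bsub>M\<^esub> (y \<oplus>\<^bsub>M\<^esub> \<ominus>\<^bsub>M\<^esub> x) \<in> L" using submoduleE(4)[OF L r d] .
  ultimately have "r \<odot>\<^bsub>M\<^esub> y \<in> L +>\<^bsub>M\<^esub> (r \<odot>\<^bsub>M\<^esub> x)"
    using coset_mem[of "r \<odot>\<^bsub>M\<^esub> x" "r \<odot>\<^bsub>M\<^esub> y"] r x yc by simp
  then have "L +>\<^bsub>M\<^esub> (r \<odot>\<^bsub>M\<^esub> y) = L +>\<^bsub>M\<^esub> (r \<odot>\<^bsub>M\<^esub> x)"
    using coset_eq[of "r \<odot>\<^bsub>M\<^esub> x" "r \<odot>\<^bsub>M\<^esub> y"] r x yc by simp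
  then show ?thesis unfolding Q_smult y_def by simp
qed

lemma Q_abelian: "abelian_group Q"
proof (rule abelian_groupI)
  fix C D assume "C \<in> carrier Q" "D \<in> carrier Q"
  then show "C \<oplus>\<^bsub>Q\<^esub> D \<in> carrier Q"
    by (metis Q_cases add_coset coset_in M.add.m_closed)
next
  show "\<zero>\<^bsub>Q\<^esub> \<in> carrier Q" using coset_in[of "\<zero>\<^bsub>M\<^esub>"] coset_zero Q_zero by simp
next
  fix C D E assume C: "C \<in> carrier Q" and D: "D \<in> carrier Q" and E: "E \<in> carrier Q"
  obtain x y z where "x \<in> carrier M" "y \<in> carrier M" "z \<in> carrier M"
    "C = L +>\<^bsub>M\<^esub> x" "D = L +>\<^bsub>M\<^esub> y" "E = L +>\<^bsub>M\<^esub> z"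
    using Q_cases[OF C] Q_cases[OF D] Q_cases[OF E] by metis
  then show "C \<oplus>\<^bsub>Q\<^esub> D \<oplus>\<^bsub>Q\<^esub> E = C \<oplus>\<^bsub>Q\<^esub> (D \<oplus>\<^bsub>Q\<^esub> E)"
    by (simp add: add_coset M.add.m_assoc)
next
  fix C D assume C: "C \<in> carrier Q" and D: "D \<in> carrier Q"
  obtain x y where "x \<in> carrier M" "y \<in> carrier M" "C = L +>\<^bsub>M\<^esub> x" "D = L +>\<^bsub>M\<^esub> y"
    using Q_cases[OF C] Q_cases[OF D] by metis
  then show "C \<oplus>\<^bsub>Q\<^esub> D = D \<oplus>\<^bsub>Q\<^esub> C"
    by (simp add: add_coset M.add.m_comm)
next
  fix C assume C: "C \<in> carrier Q"
  obtain x where "x \<in> carrier M" "C = L +>\<^bsub>M\<^esub> x" using Q_cases[OF C] by metis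
  then show "\<zero>\<^bsub>Q\<^esub> \<oplus>\<^bsub>Q\<^esub> C = C"
    using add_coset[of "\<zero>\<^bsub>M\<^esub>" x] coset_zero Q_zero by simp
next
  fix C assume C: "C \<in> carrier Q"
  obtain x where x: "x \<in> carrier M" "C = L +>\<^bsub>M\<^esub> x" using Q_cases[OF C] by metis
  have "(L +>\<^bsub>M\<^esub> \<ominus>\<^bsub>M\<^esub> x) \<oplus>\<^bsub>Q\<^esub> C = \<zero>\<^bsub>Q\<^esub>"
    using x add_coset[of "\<ominus>\<^bsub>M\<^esub> x" x] coset_zero Q_zero by (simp add: M.l_neg)
  then show "\<exists>D\<in>carrier Q. D \<oplus>\<^bsub>Q\<^esub> C = \<zero>\<^bsub>Q\<^esub>" using coset_in[of "\<ominus>\<^bsub>M\<^esub> x"] x by blast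
qed

lemma Q_module: "module R Q"
proof (rule moduleI)
  show "cring R" by (rule R.is_cring)
  show "abelian_group Q" by (rule Q_abelian)
next
  fix a C assume a: "a \<in> carrier R" and C: "C \<in> carrier Q"
  obtain x where "x \<in> carrier M" "C = L +>\<^bsub>M\<^esub> x" using Q_cases[OF C] by metis
  then show "a \<odot>\<^bsub>Q\<^esub> C \<in> carrier Q" using a by (simp add: smult_coset coset_in)
next
  fix a b C assume a: "a \<in> carrier R" and b: "b \<in> carrier R" and C: "C \<in> carrier Q"
  obtain x where "x \<in> carrier M" "C = L +>\<^bsub>M\<^esub> x" using Q_cases[OF C] by metis
  then show "(a \<oplus>\<^bsub>R\<^esub> b) \<odot>\<^bsub>Q\<^esub> C = a \<odot>\<^bsub>Q\<^esub> C \<oplus>\<^bsub>Q\<^esub> b \<odot>\<^bsub>Q\<^esub> C"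
    using a b by (simp add: smult_coset add_coset smult_l_distr)
next
  fix a C D assume a: "a \<in> carrier R" and C: "C \<in> carrier Q" and D: "D \<in> carrier Q"
  obtain x y where "x \<in> carrier M" "y \<in> carrier M" "C = L +>\<^bsub>M\<^esub> x" "D = L +>\<^bsub>M\<^esub> y"
    using Q_cases[OF C] Q_cases[OF D] by metis
  then show "a \<odot>\<^bsub>Q\<^esub> (C \<oplus>\<^bsub>Q\<^esub> D) = a \<odot>\<^bsub>Q\<^esub> C \<oplus>\<^bsub>Q\<^esub> a \<odot>\<^bsub>Q\<^esub> D"
    using a by (simp add: smult_coset add_coset smult_r_distr)
next
  fix a b C assume a: "a \<in> carrier R" and b: "b \<in> carrier R" and C: "C \<in> carrier Q"
  obtain x where "x \<in> carrier M" "C = L +>\<^bsub>M\<^esub> x" using Q_cases[OF C] by metis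
  then show "(a \<otimes>\<^bsub>R\<^esub> b) \<odot>\<^bsub>Q\<^esub> C = a \<odot>\<^bsub>Q\<^esub> (b \<odot>\<^bsub>Q\<^esub> C)"
    using a b by (simp add: smult_coset smult_assoc1)
next
  fix C assume C: "C \<in> carrier Q"
  obtain x where "x \<in> carrier M" "C = L +>\<^bsub>M\<^esub> x" using Q_cases[OF C] by metis
  then show "\<one>\<^bsub>R\<^esub> \<odot>\<^bsub>Q\<^esub> C = C" by (simp add: smult_coset)
qed

end



context qm begin

lemma T1:
  assumes G: "gabriel_filter R F" and K0: "K0 \<in> F" "\<forall>b\<in>K0. \<forall>l\<in>L. b \<odot>\<^bsub>M\<^esub> l = \<zero>\<^bsub>M\<^esub>"
    and X: "submodule X R M" and K: "K \<in> F" and KX: "\<forall>k\<in>K. \<forall>x\<in>X. k \<odot>\<^bsub>M\<^esub> x \<in> L"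
  shows "\<exists>K\<in>F. \<forall>k\<in>K. \<forall>x\<in>X. k \<odot>\<^bsub>M\<^esub> x = \<zero>\<^bsub>M\<^esub>"
proof -
  have M: "module R M" by (rule module_axioms)
  have Xs: "X \<subseteq> carrier M" "\<forall>r\<in>carrier R. \<forall>x\<in>X. r \<odot>\<^bsub>M\<^esub> x \<in> X"
    using submoduleE(1,4)[OF X] by auto
  have zsub: "\<forall>H\<in>{{\<zero>\<^bsub>M\<^esub>}}. submodule H R M" using zero_submodule[OF M] by simp
  have "\<exists>J\<in>F. \<forall>r\<in>J. \<forall>x\<in>X. \<forall>H\<in>{{\<zero>\<^bsub>M\<^esub>}}. r \<odot>\<^bsub>M\<^esub> x \<in> H"
  proof (rule core[OF R.is_cring G M Xs(1) Xs(2) zsub K K0(1)], intro ballI)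
    fix a b x H assume a: "a \<in> K" and b: "b \<in> K0" and x: "x \<in> X" and HS: "H \<in> {{\<zero>\<^bsub>M\<^esub>}}"
    have "a \<odot>\<^bsub>M\<^esub> x \<in> L" using KX a x by blast
    then show "b \<odot>\<^bsub>M\<^esub> (a \<odot>\<^bsub>M\<^esub> x) \<in> H" using K0(2) b HS by simp
  qed
  then show ?thesis by simp
qed

lemma part1:
  assumes G: "gabriel_filter R F" and LT: "totally_torsion R F M L"
  shows "totally_simple R F M \<longleftrightarrow> totally_simple R F Q"
proof -
  have M: "module R M" by (rule module_axioms)
  have QM: "module R Q" by (rule Q_module)
  obtain K0 where K0: "K0 \<in> F" "\<forall>b\<in>K0. \<forall>l\<in>L. b \<odot>\<^bsub>M\<^esub> l = \<zero>\<^bsub>M\<^esub>"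
    using LT unfolding torsion_elem[OF M] by blast
  have Fc: "\<And>K k. K \<in> F \<Longrightarrow> k \<in> K \<Longrightarrow> k \<in> carrier R" using gf_sub[OF G] by blast
  show ?thesis
  proof
    assume "totally_simple R F M"
    then have S1: "\<not> (\<exists>K\<in>F. \<forall>k\<in>K. \<forall>x\<in>carrier M. k \<odot>\<^bsub>M\<^esub> x = \<zero>\<^bsub>M\<^esub>)"
      and S2: "\<exists>h\<in>F. \<forall>H. submodule H R M \<and> \<not> (\<exists>K\<in>F. \<forall>k\<in>K. \<forall>x\<in>H. k \<odot>\<^bsub>M\<^esub> x = \<zero>\<^bsub>M\<^esub>)
        \<longrightarrow> (\<forall>k\<in>h. \<forall>x\<in>carrier M. k \<odot>\<^bsub>M\<^esub> x \<in> H)"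
      using iffD1[OF simple_elem[OF M]] by blast+
    obtain h where h: "h \<in> F" "\<forall>H. submodule H R M \<and> \<not> (\<exists>K\<in>F. \<forall>k\<in>K. \<forall>x\<in>H. k \<odot>\<^bsub>M\<^esub> x = \<zero>\<^bsub>M\<^esub>)
        \<longrightarrow> (\<forall>k\<in>h. \<forall>x\<in>carrier M. k \<odot>\<^bsub>M\<^esub> x \<in> H)" using S2 by blast
    have Q1: "\<not> (\<exists>K\<in>F. \<forall>k\<in>K. \<forall>C\<in>carrier Q. k \<odot>\<^bsub>Q\<^esub> C = \<zero>\<^bsub>Q\<^esub>)"
    proof
      assume "\<exists>K\<in>F. \<forall>k\<in>K. \<forall>C\<in>carrier Q. k \<odot>\<^bsub>Q\<^esub> C = \<zero>\<^bsub>Q\<^esub>"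
      then obtain K where K: "K \<in> F" "\<forall>k\<in>K. \<forall>C\<in>carrier Q. k \<odot>\<^bsub>Q\<^esub> C = \<zero>\<^bsub>Q\<^esub>" by blast
      have "\<forall>k\<in>K. \<forall>x\<in>carrier M. k \<odot>\<^bsub>M\<^esub> x \<in> L"
      proof (intro ballI)
        fix k x assume k: "k \<in> K" and x: "x \<in> carrier M"
        have kc: "k \<in> carrier R" using Fc[OF K(1) k] .
        have "k \<odot>\<^bsub>Q\<^esub> (L +>\<^bsub>M\<^esub> x) = L" using K(2) k coset_in[OF x] Q_zero by simp
        then have "L +>\<^bsub>M\<^esub> (k \<odot>\<^bsub>M\<^esub> x) = L" using smult_coset[OF kc x] by simp
        then show "k \<odot>\<^bsub>M\<^esub> x \<in> L" using coset_eq_L kc x by simp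
      qed
      then show False using T1[OF G K0 carrier_is_submodule K(1)] S1 by blast
    qed
    have Q2: "\<forall>H. submodule H R Q \<and> \<not> (\<exists>K\<in>F. \<forall>k\<in>K. \<forall>x\<in>H. k \<odot>\<^bsub>Q\<^esub> x = \<zero>\<^bsub>Q\<^esub>)
        \<longrightarrow> (\<forall>k\<in>h. \<forall>x\<in>carrier Q. k \<odot>\<^bsub>Q\<^esub> x \<in> H)"
    proof (intro allI impI)
      fix Hb assume Hb: "submodule Hb R Q \<and> \<not> (\<exists>K\<in>F. \<forall>k\<in>K. \<forall>x\<in>Hb. k \<odot>\<^bsub>Q\<^esub> x = \<zero>\<^bsub>Q\<^esub>)"
      have Hbc: "Hb \<subseteq> carrier Q \<and> \<zero>\<^bsub>Q\<^esub> \<in> Hb \<and>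
         (\<forall>a\<in>Hb. \<forall>b\<in>Hb. a \<oplus>\<^bsub>Q\<^esub> b \<in> Hb) \<and> (\<forall>r\<in>carrier R. \<forall>a\<in>Hb. r \<odot>\<^bsub>Q\<^esub> a \<in> Hb)"
        using Hb sub_char[OF QM, of Hb] by blast
      define H where "H = {x \<in> carrier M. L +>\<^bsub>M\<^esub> x \<in> Hb}"
      have Hsub: "submodule H R M"
        unfolding sub_char[OF M]
      proof (intro conjI ballI)
        show "H \<subseteq> carrier M" by (auto simp: H_def)
        show "\<zero>\<^bsub>M\<^esub> \<in> H" using Hbc coset_zero Q_zero by (simp add: H_def)
        fix a b assume a: "a \<in> H" and b: "b \<in> H"
        then have ab: "a \<in> carrier M" "b \<in> carrier M" "L +>\<^bsub>M\<^esub> a \<in> Hb" "L +>\<^bsub>M\<^esub> b \<in> Hb"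
          by (simp_all add: H_def)
        then have "(L +>\<^bsub>M\<^esub> a) \<oplus>\<^bsub>Q\<^esub> (L +>\<^bsub>M\<^esub> b) \<in> Hb" using Hbc by blast
        then have "L +>\<^bsub>M\<^esub> (a \<oplus>\<^bsub>M\<^esub> b) \<in> Hb" using add_coset[OF ab(1,2)] by simp
        then show "a \<oplus>\<^bsub>M\<^esub> b \<in> H" using ab by (simp add: H_def)
      next
        fix r a assume r: "r \<in> carrier R" and a: "a \<in> H"
        then have ab: "a \<in> carrier M" "L +>\<^bsub>M\<^esub> a \<in> Hb" by (simp_all add: H_def)
        then have "r \<odot>\<^bsub>Q\<^esub> (L +>\<^bsub>M\<^esub> a) \<in> Hb" using Hbc r by blast
        then have "L +>\<^bsub>M\<^esub> (r \<odot>\<^bsub>M\<^esub> a) \<in> Hb" using smult_coset[OF r ab(1)] by simp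
        then show "r \<odot>\<^bsub>M\<^esub> a \<in> H" using ab r by (simp add: H_def)
      qed
      have "\<not> (\<exists>K\<in>F. \<forall>k\<in>K. \<forall>x\<in>H. k \<odot>\<^bsub>M\<^esub> x = \<zero>\<^bsub>M\<^esub>)"
      proof
        assume "\<exists>K\<in>F. \<forall>k\<in>K. \<forall>x\<in>H. k \<odot>\<^bsub>M\<^esub> x = \<zero>\<^bsub>M\<^esub>"
        then obtain K where K: "K \<in> F" "\<forall>k\<in>K. \<forall>x\<in>H. k \<odot>\<^bsub>M\<^esub> x = \<zero>\<^bsub>M\<^esub>" by blast
        have "\<forall>k\<in>K. \<forall>C\<in>Hb. k \<odot>\<^bsub>Q\<^esub> C = \<zero>\<^bsub>Q\<^esub>"
        proof (intro ballI)
          fix k C assume k: "k \<in> K" and C: "C \<in> Hb"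
          have kc: "k \<in> carrier R" using Fc[OF K(1) k] .
          obtain x where x: "x \<in> carrier M" "C = L +>\<^bsub>M\<^esub> x" using Q_cases[of C] C Hbc by blast
          have "x \<in> H" using x C by (simp add: H_def)
          then have "k \<odot>\<^bsub>M\<^esub> x = \<zero>\<^bsub>M\<^esub>" using K(2) k by blast
          then show "k \<odot>\<^bsub>Q\<^esub> C = \<zero>\<^bsub>Q\<^esub>" using smult_coset[OF kc x(1)] x(2) coset_zero Q_zero by simp
        qed
        then show False using Hb K(1) by blast
      qed
      then have hH: "\<forall>k\<in>h. \<forall>x\<in>carrier M. k \<odot>\<^bsub>M\<^esub> x \<in> H" using h(2)[rule_format, OF conjI[OF Hsub]] by blast
      show "\<forall>k\<in>h. \<forall>x\<in>carrier Q. k \<odot>\<^bsub>Q\<^esub> x \<in> Hb"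
      proof (intro ballI)
        fix k C assume k: "k \<in> h" and C: "C \<in> carrier Q"
        have kc: "k \<in> carrier R" using Fc[OF h(1) k] .
        obtain x where x: "x \<in> carrier M" "C = L +>\<^bsub>M\<^esub> x" using Q_cases[OF C] by blast
        have "k \<odot>\<^bsub>M\<^esub> x \<in> H" using hH k x by blast
        then show "k \<odot>\<^bsub>Q\<^esub> C \<in> Hb" using smult_coset[OF kc x(1)] x(2) by (simp add: H_def)
      qed
    qed
    show "totally_simple R F Q"
      using iffD2[OF simple_elem[OF QM]] Q1 Q2 h(1) by blast
  next
    assume "totally_simple R F Q"
    then have S1: "\<not> (\<exists>K\<in>F. \<forall>k\<in>K. \<forall>C\<in>carrier Q. k \<odot>\<^bsub>Q\<^esub> C = \<zero>\<^bsub>Q\<^esub>)"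
      and S2: "\<exists>h\<in>F. \<forall>H. submodule H R Q \<and> \<not> (\<exists>K\<in>F. \<forall>k\<in>K. \<forall>x\<in>H. k \<odot>\<^bsub>Q\<^esub> x = \<zero>\<^bsub>Q\<^esub>)
        \<longrightarrow> (\<forall>k\<in>h. \<forall>x\<in>carrier Q. k \<odot>\<^bsub>Q\<^esub> x \<in> H)"
      using iffD1[OF simple_elem[OF QM]] by blast+
    obtain h where h: "h \<in> F" "\<forall>H. submodule H R Q \<and> \<not> (\<exists>K\<in>F. \<forall>k\<in>K. \<forall>x\<in>H. k \<odot>\<^bsub>Q\<^esub> x = \<zero>\<^bsub>Q\<^esub>)
        \<longrightarrow> (\<forall>k\<in>h. \<forall>x\<in>carrier Q. k \<odot>\<^bsub>Q\<^esub> x \<in> H)" using S2 by blast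
    have M1: "\<not> (\<exists>K\<in>F. \<forall>k\<in>K. \<forall>x\<in>carrier M. k \<odot>\<^bsub>M\<^esub> x = \<zero>\<^bsub>M\<^esub>)"
    proof
      assume "\<exists>K\<in>F. \<forall>k\<in>K. \<forall>x\<in>carrier M. k \<odot>\<^bsub>M\<^esub> x = \<zero>\<^bsub>M\<^esub>"
      then obtain K where K: "K \<in> F" "\<forall>k\<in>K. \<forall>x\<in>carrier M. k \<odot>\<^bsub>M\<^esub> x = \<zero>\<^bsub>M\<^esub>" by blast
      have "\<forall>k\<in>K. \<forall>C\<in>carrier Q. k \<odot>\<^bsub>Q\<^esub> C = \<zero>\<^bsub>Q\<^esub>"
      proof (intro ballI)
        fix k C assume k: "k \<in> K" and C: "C \<in> carrier Q"
        have kc: "k \<in> carrier R" using Fc[OF K(1) k] .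
        obtain x where x: "x \<in> carrier M" "C = L +>\<^bsub>M\<^esub> x" using Q_cases[OF C] by blast
        have "k \<odot>\<^bsub>M\<^esub> x = \<zero>\<^bsub>M\<^esub>" using K(2) k x by blast
        then show "k \<odot>\<^bsub>Q\<^esub> C = \<zero>\<^bsub>Q\<^esub>" using smult_coset[OF kc x(1)] x(2) coset_zero Q_zero by simp
      qed
      then show False using S1 K(1) by blast
    qed
    define S where "S = {H. submodule H R M \<and> \<not> (\<exists>K\<in>F. \<forall>k\<in>K. \<forall>x\<in>H. k \<odot>\<^bsub>M\<^esub> x = \<zero>\<^bsub>M\<^esub>)}"
    have SS: "\<forall>H\<in>S. submodule H R M" by (simp add: S_def)
    have key: "b \<odot>\<^bsub>M\<^esub> (a \<odot>\<^bsub>M\<^esub> x) \<in> H"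
      if a: "a \<in> h" and b: "b \<in> K0" and x: "x \<in> carrier M" and HS: "H \<in> S" for a b x H
    proof -
      have Hs: "submodule H R M" and Hnt: "\<not> (\<exists>K\<in>F. \<forall>k\<in>K. \<forall>x\<in>H. k \<odot>\<^bsub>M\<^esub> x = \<zero>\<^bsub>M\<^esub>)"
        using HS by (simp_all add: S_def)
      have Hc: "H \<subseteq> carrier M \<and> \<zero>\<^bsub>M\<^esub> \<in> H \<and>
         (\<forall>a\<in>H. \<forall>b\<in>H. a \<oplus>\<^bsub>M\<^esub> b \<in> H) \<and> (\<forall>r\<in>carrier R. \<forall>a\<in>H. r \<odot>\<^bsub>M\<^esub> a \<in> H)"
        using Hs sub_char[OF M, of H] by blast
      define Hb where "Hb = {C \<in> carrier Q. \<exists>z\<in>H. C = L +>\<^bsub>M\<^esub> z}"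
      have Hbsub: "submodule Hb R Q"
        unfolding sub_char[OF QM]
      proof (intro conjI ballI)
        show "Hb \<subseteq> carrier Q" unfolding Hb_def by blast
        have z0: "\<zero>\<^bsub>M\<^esub> \<in> H" using Hc by blast
        have "L +>\<^bsub>M\<^esub> \<zero>\<^bsub>M\<^esub> \<in> carrier Q" by (rule coset_in) simp
        then have "L +>\<^bsub>M\<^esub> \<zero>\<^bsub>M\<^esub> \<in> Hb" unfolding Hb_def using z0 by blast
        then show "\<zero>\<^bsub>Q\<^esub> \<in> Hb" unfolding Q_zero coset_zero .
      next
        fix C D assume C: "C \<in> Hb" and D: "D \<in> Hb"
        obtain z where z: "z \<in> H" "C = L +>\<^bsub>M\<^esub> z" using C unfolding Hb_def by blast
        obtain w where w: "w \<in> H" "D = L +>\<^bsub>M\<^esub> w" using D unfolding Hb_def by blast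
        have zc: "z \<in> carrier M" "w \<in> carrier M" using z w Hc by auto
        have e: "C \<oplus>\<^bsub>Q\<^esub> D = L +>\<^bsub>M\<^esub> (z \<oplus>\<^bsub>M\<^esub> w)" using add_coset[OF zc] z w by simp
        have m: "z \<oplus>\<^bsub>M\<^esub> w \<in> H" using Hc z w by blast
        have c: "L +>\<^bsub>M\<^esub> (z \<oplus>\<^bsub>M\<^esub> w) \<in> carrier Q" using zc by (simp add: coset_in)
        show "C \<oplus>\<^bsub>Q\<^esub> D \<in> Hb" unfolding e Hb_def using m c by blast
      next
        fix r C assume r: "r \<in> carrier R" and C: "C \<in> Hb"
        obtain z where z: "z \<in> H" "C = L +>\<^bsub>M\<^esub> z" using C unfolding Hb_def by blast
        have zc: "z \<in> carrier M" using z Hc by auto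
        have e: "r \<odot>\<^bsub>Q\<^esub> C = L +>\<^bsub>M\<^esub> (r \<odot>\<^bsub>M\<^esub> z)" using smult_coset[OF r zc] z by simp
        have m: "r \<odot>\<^bsub>M\<^esub> z \<in> H" using Hc z r by blast
        have c: "L +>\<^bsub>M\<^esub> (r \<odot>\<^bsub>M\<^esub> z) \<in> carrier Q" using zc r by (simp add: coset_in)
        show "r \<odot>\<^bsub>Q\<^esub> C \<in> Hb" unfolding e Hb_def using m c by blast
      qed
      have "\<not> (\<exists>K\<in>F. \<forall>k\<in>K. \<forall>C\<in>Hb. k \<odot>\<^bsub>Q\<^esub> C = \<zero>\<^bsub>Q\<^esub>)"
      proof
        assume "\<exists>K\<in>F. \<forall>k\<in>K. \<forall>C\<in>Hb. k \<odot>\<^bsub>Q\<^esub> C = \<zero>\<^bsub>Q\<^esub>"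
        then obtain K where K: "K \<in> F" "\<forall>k\<in>K. \<forall>C\<in>Hb. k \<odot>\<^bsub>Q\<^esub> C = \<zero>\<^bsub>Q\<^esub>" by blast
        have "\<forall>k\<in>K. \<forall>z\<in>H. k \<odot>\<^bsub>M\<^esub> z \<in> L"
        proof (intro ballI)
          fix k z assume k: "k \<in> K" and z: "z \<in> H"
          have kc: "k \<in> carrier R" using Fc[OF K(1) k] .
          have zc: "z \<in> carrier M" using z Hc by auto
          have "L +>\<^bsub>M\<^esub> z \<in> Hb" using z zc coset_in unfolding Hb_def by blast
          then have "k \<odot>\<^bsub>Q\<^esub> (L +>\<^bsub>M\<^esub> z) = L" using K(2) k Q_zero by simp
          then have "L +>\<^bsub>M\<^esub> (k \<odot>\<^bsub>M\<^esub> z) = L" using smult_coset[OF kc zc] by simp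
          then show "k \<odot>\<^bsub>M\<^esub> z \<in> L" using coset_eq_L kc zc by simp
        qed
        then show False using T1[OF G K0 Hs K(1)] Hnt by blast
      qed
      then have hb: "\<forall>k\<in>h. \<forall>C\<in>carrier Q. k \<odot>\<^bsub>Q\<^esub> C \<in> Hb" using h(2)[rule_format, OF conjI[OF Hbsub]] by blast
      have ac: "a \<in> carrier R" using Fc[OF h(1) a] .
      have "a \<odot>\<^bsub>Q\<^esub> (L +>\<^bsub>M\<^esub> x) \<in> Hb" using hb a coset_in[OF x] by blast
      then have "L +>\<^bsub>M\<^esub> (a \<odot>\<^bsub>M\<^esub> x) \<in> Hb" using smult_coset[OF ac x] by simp
      then obtain z where z: "z \<in> H" "L +>\<^bsub>M\<^esub> (a \<odot>\<^bsub>M\<^esub> x) = L +>\<^bsub>M\<^esub> z" by (auto simp: Hb_def)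
      have zc: "z \<in> carrier M" using z Hc by auto
      have axc: "a \<odot>\<^bsub>M\<^esub> x \<in> carrier M" using ac x by simp
      have "a \<odot>\<^bsub>M\<^esub> x \<in> L +>\<^bsub>M\<^esub> z" using coset_eq[OF zc axc] z(2) by simp
      then have l: "a \<odot>\<^bsub>M\<^esub> x \<oplus>\<^bsub>M\<^esub> \<ominus>\<^bsub>M\<^esub> z \<in> L" using coset_mem[OF zc axc] by simp
      have bc: "b \<in> carrier R" using Fc[OF K0(1) b] .
      have eq: "a \<odot>\<^bsub>M\<^esub> x = (a \<odot>\<^bsub>M\<^esub> x \<oplus>\<^bsub>M\<^esub> \<ominus>\<^bsub>M\<^esub> z) \<oplus>\<^bsub>M\<^esub> z"
        using axc zc by (simp add: M.a_assoc M.l_neg)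
      have "b \<odot>\<^bsub>M\<^esub> (a \<odot>\<^bsub>M\<^esub> x) = b \<odot>\<^bsub>M\<^esub> (a \<odot>\<^bsub>M\<^esub> x \<oplus>\<^bsub>M\<^esub> \<ominus>\<^bsub>M\<^esub> z) \<oplus>\<^bsub>M\<^esub> b \<odot>\<^bsub>M\<^esub> z"
        by (subst eq) (simp add: smult_r_distr bc axc zc)
      also have "\<dots> = b \<odot>\<^bsub>M\<^esub> z" using K0(2) b l bc zc by simp
      finally show ?thesis using Hc z(1) bc by simp
    qed
    have "\<exists>J\<in>F. \<forall>r\<in>J. \<forall>x\<in>carrier M. \<forall>H\<in>S. r \<odot>\<^bsub>M\<^esub> x \<in> H"
      by (rule core[OF R.is_cring G M subset_refl _ SS h(1) K0(1)]) (simp_all add: key)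
    then obtain J where J: "J \<in> F" "\<forall>r\<in>J. \<forall>x\<in>carrier M. \<forall>H\<in>S. r \<odot>\<^bsub>M\<^esub> x \<in> H" by blast
    have "\<forall>H. submodule H R M \<and> \<not> (\<exists>K\<in>F. \<forall>k\<in>K. \<forall>x\<in>H. k \<odot>\<^bsub>M\<^esub> x = \<zero>\<^bsub>M\<^esub>)
        \<longrightarrow> (\<forall>k\<in>J. \<forall>x\<in>carrier M. k \<odot>\<^bsub>M\<^esub> x \<in> H)"
      using J(2) unfolding S_def by blast
    then show "totally_simple R F M"
      using iffD2[OF simple_elem[OF M]] M1 J(1) by blast
  qed
qed

end


theorem mainTheorem20:
  fixes R :: "('a, 'c) ring_scheme"
    and F :: "'a set set"
  assumes "cring R"
    and "gabriel_filter R F"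
  shows "(\<forall>(M :: ('a, 'b) module) L.
            module R M \<and> submodule L R M \<and> totally_torsion R F M L \<longrightarrow>
            (totally_simple R F M \<longleftrightarrow> totally_simple R F (quot_module R M L)))
       \<and> (\<forall>(M' :: ('a, 'e) module) N h0.
            module R M' \<and> submodule N R M' \<and> h0 \<in> F \<and>
            module_ideal_prod R M' (carrier M') h0 \<subseteq> N \<longrightarrow>
            (totally_simple R F (M'\<lparr>carrier := N\<rparr>) \<longleftrightarrow> totally_simple R F M'))"
proof (intro conjI allI impI)
  fix M :: "('a, 'b) module" and L
  assume H: "module R M \<and> submodule L R M \<and> totally_torsion R F M L"
  have Q: "qm R M L" using H by (intro qm.intro qm_axioms.intro) simp_all
  show "totally_simple R F M \<longleftrightarrow> totally_simple R F (quot_module R M L)"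
    using qm.part1[OF Q assms(2)] H by simp
next
  fix M' :: "('a, 'e) module" and N h0
  assume H: "module R M' \<and> submodule N R M' \<and> h0 \<in> F \<and>
            module_ideal_prod R M' (carrier M') h0 \<subseteq> N"
  show "totally_simple R F (M'\<lparr>carrier := N\<rparr>) \<longleftrightarrow> totally_simple R F M'"
    using part2[OF assms(1,2)] H by blast
qed

end
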